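(* Let $k\ge 4$ be an integer. For every tree $T$ of order $n\ge k$, $W_{tsp,k}(T)=2W_k(T)$. If $G$ is a finite simple connected graph of order $n\ge k$ that is not a tree, then $W_{tsp,k}(G)<2W_k(G)$.
   Context: For a set $S$ of $k$ vertices of a connected graph $G$, $\mathrm{tsp}_k(S)$ is the length (number of edge traversals, with multiplicity) of a shortest closed walk in $G$ visiting all vertices of $S$, and $W_{tsp,k}(G)=\sum_{S\subseteq V,\,|S|=k}\mathrm{tsp}_k(S)$. The Steiner distance $d_k(S)$ is the minimum number of edges of a connected subgraph (a subtree) of $G$ containing $S$, and $W_k(G)=\sum_{S\subseteq V,\,|S|=k}d_k(S)$. *)

theory Defs
  imports Main
begin

definition graph :: "'a set \<Rightarrow> 'a set set \<Rightarrow> bool" where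
  "graph V E \<longleftrightarrow> finite V \<and> (\<forall>e\<in>E. \<exists>u v. e = {u, v} \<and> u \<noteq> v \<and> u \<in> V \<and> v \<in> V)"

text \<open>A walk is a nonempty vertex list with consecutive vertices adjacent;
  its length (number of edge traversals) is length xs - 1.\<close>
definition walk :: "'a set \<Rightarrow> 'a set set \<Rightarrow> 'a list \<Rightarrow> bool" where
  "walk V E xs \<longleftrightarrow> xs \<noteq> [] \<and> set xs \<subseteq> V \<and>
     (\<forall>i < length xs - 1. {xs ! i, xs ! Suc i} \<in> E)"

definition connected_graph :: "'a set \<Rightarrow> 'a set set \<Rightarrow> bool" where
  "connected_graph V E \<longleftrightarrow> V \<noteq> {} \<and>
     (\<forall>u\<in>V. \<forall>v\<in>V. \<exists>xs. walk V E xs \<and> hd xs = u \<and> last xs = v)"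

text \<open>A cycle: closed walk v0 v1 ... vm = v0 with m >= 3 and v1,...,vm distinct.\<close>
definition cycle :: "'a set \<Rightarrow> 'a set set \<Rightarrow> 'a list \<Rightarrow> bool" where
  "cycle V E xs \<longleftrightarrow> walk V E xs \<and> length xs \<ge> 4 \<and> hd xs = last xs \<and> distinct (tl xs)"

definition tree :: "'a set \<Rightarrow> 'a set set \<Rightarrow> bool" where
  "tree V E \<longleftrightarrow> connected_graph V E \<and> \<not> (\<exists>xs. cycle V E xs)"

definition tsp :: "'a set \<Rightarrow> 'a set set \<Rightarrow> 'a set \<Rightarrow> nat" where
  "tsp V E S = (LEAST m. \<exists>xs. walk V E xs \<and> hd xs = last xs \<and> S \<subseteq> set xs \<and> length xs - 1 = m)"

definition steiner_dist :: "'a set \<Rightarrow> 'a set set \<Rightarrow> 'a set \<Rightarrow> nat" where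
  "steiner_dist V E S = (LEAST m. \<exists>V' E'. V' \<subseteq> V \<and> E' \<subseteq> E \<and> graph V' E' \<and>
      connected_graph V' E' \<and> S \<subseteq> V' \<and> card E' = m)"

definition W_tsp :: "'a set \<Rightarrow> 'a set set \<Rightarrow> nat \<Rightarrow> nat" where
  "W_tsp V E k = (\<Sum>S\<in>{S. S \<subseteq> V \<and> card S = k}. tsp V E S)"

definition W_steiner :: "'a set \<Rightarrow> 'a set set \<Rightarrow> nat \<Rightarrow> nat" where
  "W_steiner V E k = (\<Sum>S\<in>{S. S \<subseteq> V \<and> card S = k}. steiner_dist V E S)"

end

theory Submission
  imports Defs
begin

fun wedges :: "'a list \<Rightarrow> 'a set set" where
  "wedges (x # y # ys) = insert {x, y} (wedges (y # ys))"
| "wedges _ = {}"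

lemma wedges_nth: "wedges xs = {{xs ! i, xs ! Suc i} | i. i < length xs - 1}"
proof (induction xs rule: wedges.induct)
  case (1 x y ys)
  have "{{(x#y#ys) ! i, (x#y#ys) ! Suc i} | i. i < length (x#y#ys) - 1}
      = insert {x,y} {{(y#ys) ! i, (y#ys) ! Suc i} | i. i < length (y#ys) - 1}"
  proof (rule set_eqI, rule iffI)
    fix e assume "e \<in> {{(x#y#ys) ! i, (x#y#ys) ! Suc i} | i. i < length (x#y#ys) - 1}"
    then obtain i where "e = {(x#y#ys) ! i, (x#y#ys) ! Suc i}" "i < length (x#y#ys) - 1" by blast
    then show "e \<in> insert {x,y} {{(y#ys) ! i, (y#ys) ! Suc i} | i. i < length (y#ys) - 1}"
      by (cases i) auto
  next
    fix e assume "e \<in> insert {x,y} {{(y#ys) ! i, (y#ys) ! Suc i} | i. i < length (y#ys) - 1}"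
    then show "e \<in> {{(x#y#ys) ! i, (x#y#ys) ! Suc i} | i. i < length (x#y#ys) - 1}"
    proof
      assume "e = {x,y}" then show ?thesis by force
    next
      assume "e \<in> {{(y#ys) ! i, (y#ys) ! Suc i} | i. i < length (y#ys) - 1}"
      then obtain i where "e = {(y#ys) ! i, (y#ys) ! Suc i}" "i < length (y#ys) - 1" by blast
      then show ?thesis by (intro CollectI exI[of _ "Suc i"]) auto
    qed
  qed
  then show ?case using 1 by simp
qed auto

lemma walk_iff: "walk V E xs \<longleftrightarrow> xs \<noteq> [] \<and> set xs \<subseteq> V \<and> wedges xs \<subseteq> E"
  unfolding walk_def wedges_nth by blast

lemma wedges_append: "wedges (xs @ y # ys) = wedges (xs @ [y]) \<union> wedges (y # ys)"
  by (induction xs rule: wedges.induct) auto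

lemma wedges_sub_left: "wedges xs \<subseteq> wedges (xs @ ys)"
  by (induction xs rule: wedges.induct) auto

lemma wedges_Cons_sub: "wedges ys \<subseteq> wedges (x # ys)"
  by (cases ys) auto

lemma wedges_sub_right: "wedges ys \<subseteq> wedges (xs @ ys)"
  by (induction xs) (auto dest: subsetD[OF wedges_Cons_sub])

lemma wedges_subset_set: "e \<in> wedges xs \<Longrightarrow> e \<subseteq> set xs"
  by (induction xs rule: wedges.induct) auto

lemma finite_wedges: "finite (wedges xs)"
  by (induction xs rule: wedges.induct) auto

lemma card_wedges_distinct: "distinct xs \<Longrightarrow> card (wedges xs) = length xs - 1"
proof (induction xs rule: wedges.induct)
  case (1 x y ys)
  have "{x,y} \<notin> wedges (y # ys)"
  proof
    assume "{x,y} \<in> wedges (y # ys)"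
    then have "x \<in> set (y#ys)" using wedges_subset_set by blast
    then show False using 1(2) by simp
  qed
  then show ?case using 1 by (simp add: finite_wedges)
qed auto

lemma graph_finite_E: "graph V E \<Longrightarrow> finite E"
proof -
  assume g: "graph V E"
  have "E \<subseteq> Pow V"
  proof
    fix e assume "e \<in> E"
    then obtain u v where "e = {u,v}" "u \<in> V" "v \<in> V" using g unfolding graph_def by blast
    then show "e \<in> Pow V" by auto
  qed
  moreover have "finite V" using g unfolding graph_def by blast
  ultimately show ?thesis using finite_subset by blast
qed

lemma graph_no_loop: "graph V E \<Longrightarrow> {a, a} \<notin> E"
  unfolding graph_def by (auto simp: doubleton_eq_iff)

lemma closed_seg:
  "length xs \<ge> 2 \<Longrightarrow> hd xs = last xs \<Longrightarrow>
   \<exists>p s q. xs = p @ s @ q \<and> length s \<ge> 2 \<and> hd s = last s \<and> distinct (tl s)"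
proof (induction "length xs" arbitrary: xs rule: less_induct)
  case less
  show ?case
  proof (cases "distinct (tl xs)")
    case True then show ?thesis using less.prems by (intro exI[of _ "[]"] exI[of _ xs]) auto
  next
    case False
    then obtain a b c y where d: "tl xs = a @ [y] @ b @ [y] @ c" using not_distinct_decomp by blast
    define s0 where "s0 = y # b @ [y]"
    have xs: "xs = hd xs # tl xs" using less.prems by (cases xs) auto
    have l: "length (tl xs) = length a + length b + length c + 2" using d by simp
    have "length xs = Suc (length (tl xs))" using less.prems by (cases xs) auto
    then have "length s0 < length xs" using l unfolding s0_def by simp
    moreover have "length s0 \<ge> 2" "hd s0 = last s0" unfolding s0_def by auto
    ultimately obtain p s q where "s0 = p @ s @ q" "length s \<ge> 2" "hd s = last s" "distinct (tl s)"
      using less.hyps by blast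
    moreover have "xs = (hd xs # a @ p) @ s @ (q @ c)" using d xs calculation(1)
      unfolding s0_def by (metis append.assoc append_Cons append_Nil)
    ultimately show ?thesis by blast
  qed
qed

lemma wedges_mid: "wedges s \<subseteq> wedges (p @ s @ q)"
  using wedges_sub_left wedges_sub_right by (metis subset_trans)

lemma cyclefree_walk:
  assumes g: "graph V E"
  shows "walk V E xs \<Longrightarrow> hd xs = last xs \<Longrightarrow> (\<forall>c. cycle V E c \<longrightarrow> length xs < length c)
         \<Longrightarrow> 2 * card (wedges xs) \<le> length xs - 1"
proof (induction "length xs" arbitrary: xs rule: less_induct)
  case less
  have w: "xs \<noteq> []" "set xs \<subseteq> V" "wedges xs \<subseteq> E" using less.prems(1) unfolding walk_iff by auto
  show ?case
  proof (cases "length xs \<ge> 2")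
    case False
    then have "length (tl xs) = 0" by simp
    then have "tl xs = []" by blast
    then have "wedges xs = {}" by (cases xs) auto
    then show ?thesis by simp
  next
    case True
    then obtain p s q where d: "xs = p @ s @ q" "length s \<ge> 2" "hd s = last s" "distinct (tl s)"
      using closed_seg less.prems(2) by blast
    have ws: "wedges s \<subseteq> E" using d(1) w(3) wedges_mid by blast
    have ss: "set s \<subseteq> V" using d(1) w(2) by auto
    consider "length s = 2" | "length s = 3" | "length s \<ge> 4" using d(2) by linarith
    then show ?thesis
    proof cases
      case 1
      then obtain a b where "s = [a, b]" by (cases s; cases "tl s"; cases "tl (tl s)") auto
      then have "s = [a,a]" using d(3) by simp
      then show ?thesis using ws graph_no_loop[OF g] by auto
    next
      case 3
      have "cycle V E s" unfolding cycle_def walk_iff using 3 d ws ss by auto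
      then have "length xs < length s" using less.prems(3) by blast
      moreover have "length s \<le> length xs" using d(1) by simp
      ultimately show ?thesis by linarith
    next
      case 2
      then obtain a b c where "s = [a, b, c]"
        by (cases s; cases "tl s"; cases "tl (tl s)"; cases "tl (tl (tl s))") auto
      then have sa: "s = [a,b,a]" using d(3) by simp
      define xs' where "xs' = p @ a # q"
      have e1: "wedges xs = wedges (p @ [a]) \<union> wedges (a # b # a # q)"
        using d(1) sa wedges_append[of p a "b # a # q"] by simp
      have e2: "wedges xs' = wedges (p @ [a]) \<union> wedges (a # q)"
        unfolding xs'_def using wedges_append by metis
      have sub: "wedges xs \<subseteq> insert {a,b} (wedges xs')" using e1 e2 by (auto simp: insert_commute)
      have lx: "length xs' + 2 = length xs" unfolding xs'_def using d(1) sa by simp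
      have sx: "set xs' \<subseteq> set xs" unfolding xs'_def using d(1) sa by auto
      have h1: "walk V E xs'" unfolding walk_iff
        using w sx sub e1 e2 unfolding xs'_def by auto
      have h2: "hd xs' = last xs'" using less.prems(2) d(1) sa unfolding xs'_def
        by (cases p; cases q) auto
      have h3: "\<forall>c. cycle V E c \<longrightarrow> length xs' < length c"
      proof (intro allI impI)
        fix c assume "cycle V E c"
        then have "length xs < length c" using less.prems(3) by blast
        then show "length xs' < length c" using lx by linarith
      qed
      have h0: "length xs' < length xs" using lx by linarith
      have ih: "2 * card (wedges xs') \<le> length xs' - 1"
        using less.hyps[OF h0 h1 h2 h3] .
      have "card (wedges xs) \<le> card (insert {a,b} (wedges xs'))"
        using sub by (intro card_mono) (auto simp: finite_wedges)
      also have "\<dots> \<le> Suc (card (wedges xs'))" by (simp add: card_insert_if finite_wedges)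
      moreover have "length xs' \<ge> 1" unfolding xs'_def by simp
      ultimately show ?thesis using ih lx by linarith
    qed
  qed
qed

lemma crossing:
  "wedges xs \<subseteq> E \<Longrightarrow> xs \<noteq> [] \<Longrightarrow> hd xs \<in> A \<Longrightarrow> last xs \<notin> A \<Longrightarrow>
   \<exists>a b. a \<in> A \<and> b \<notin> A \<and> {a,b} \<in> E \<and> b \<in> set xs"
proof (induction xs rule: wedges.induct)
  case (1 x y ys)
  show ?case
  proof (cases "y \<in> A")
    case True
    then obtain a b where "a \<in> A \<and> b \<notin> A \<and> {a,b} \<in> E \<and> b \<in> set (y # ys)"
      using 1 by auto
    then show ?thesis by auto
  next
    case False then show ?thesis using 1 by auto
  qed
qed auto

lemma shortcut:
  "xs \<noteq> [] \<Longrightarrow> \<exists>ys. ys \<noteq> [] \<and> distinct ys \<and> set ys \<subseteq> set xs \<and> wedges ys \<subseteq> wedges xs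
     \<and> hd ys = hd xs \<and> last ys = last xs"
proof (induction "length xs" arbitrary: xs rule: less_induct)
  case less
  show ?case
  proof (cases "distinct xs")
    case True then show ?thesis using less.prems by blast
  next
    case False
    then obtain a b c y where d: "xs = a @ [y] @ b @ [y] @ c" using not_distinct_decomp by blast
    define xs' where "xs' = a @ y # c"
    have h0: "length xs' < length xs" unfolding xs'_def d by simp
    have h1: "xs' \<noteq> []" unfolding xs'_def by simp
    obtain ys where ys: "ys \<noteq> [] \<and> distinct ys \<and> set ys \<subseteq> set xs' \<and> wedges ys \<subseteq> wedges xs'
     \<and> hd ys = hd xs' \<and> last ys = last xs'" using less.hyps[OF h0 h1] by blast
    have e: "wedges xs' = wedges (a @ [y]) \<union> wedges (y # c)" unfolding xs'_def by (rule wedges_append)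
    have d1: "xs = (a @ [y]) @ (b @ [y] @ c)" using d by simp
    have d2: "xs = (a @ [y] @ b) @ (y # c)" using d by simp
    have "wedges (a @ [y]) \<subseteq> wedges xs" using d1 wedges_sub_left by metis
    moreover have "wedges (y # c) \<subseteq> wedges xs" using d2 wedges_sub_right by metis
    ultimately have k1: "wedges xs' \<subseteq> wedges xs" using e by blast
    have k2: "set xs' \<subseteq> set xs" unfolding xs'_def d by auto
    have k3: "hd xs' = hd xs" unfolding xs'_def d by (cases a) simp_all
    have k4: "last xs' = last xs" unfolding xs'_def d by (cases c) simp_all
    have "set ys \<subseteq> set xs" using ys k2 by (meson order_trans)
    moreover have "wedges ys \<subseteq> wedges xs" using ys k1 by (meson order_trans)
    moreover have "hd ys = hd xs" using ys k3 by simp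
    moreover have "last ys = last xs" using ys k4 by simp
    ultimately show ?thesis using ys by (intro exI[of _ ys]) simp
  qed
qed

lemma grow:
  assumes fin: "finite V" and con: "connected_graph V E"
  shows "w \<noteq> [] \<Longrightarrow> set w \<subseteq> V \<Longrightarrow> wedges w \<subseteq> E \<Longrightarrow> hd w = last w \<Longrightarrow>
    card (set w) \<le> n \<Longrightarrow> n \<le> card V \<Longrightarrow>
    \<exists>w'. w' \<noteq> [] \<and> set w \<subseteq> set w' \<and> set w' \<subseteq> V \<and> wedges w' \<subseteq> E \<and> hd w' = last w'
       \<and> card (set w') = n \<and> length w' = length w + 2 * (n - card (set w))
       \<and> card (wedges w') = card (wedges w) + (n - card (set w))"
proof (induction "n - card (set w)" arbitrary: w)
  case 0
  then show ?case by (intro exI[of _ w]) auto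
next
  case (Suc d)
  have "card (set w) < card V" using Suc by linarith
  then have "set w \<noteq> V" by auto
  then obtain b0 where b0: "b0 \<in> V" "b0 \<notin> set w" using Suc.prems(2) by blast
  obtain a0 where a0: "a0 \<in> set w" using Suc.prems(1) by (cases w) auto
  obtain xs where xs: "walk V E xs" "hd xs = a0" "last xs = b0"
    using con a0 b0 Suc.prems(2) unfolding connected_graph_def by blast
  then obtain a b where ab: "a \<in> set w" "b \<notin> set w" "{a,b} \<in> E" "b \<in> set xs"
    using crossing[of xs E "set w"] a0 b0 unfolding walk_iff by blast
  have bV: "b \<in> V" using ab(4) xs(1) unfolding walk_iff by blast
  obtain p r where pr: "w = p @ a # r" using ab(1) split_list by metis
  define w1 where "w1 = p @ a # b # a # r"
  have e1: "wedges w1 = wedges (p @ [a]) \<union> insert {a,b} (insert {b,a} (wedges (a # r)))"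
    unfolding w1_def using wedges_append[of p a "b # a # r"] by simp
  have e2: "wedges w = wedges (p @ [a]) \<union> wedges (a # r)"
    unfolding pr using wedges_append by metis
  have ew: "wedges w1 = insert {a,b} (wedges w)" using e1 e2 by (auto simp: insert_commute)
  have nab: "{a,b} \<notin> wedges w" using ab(2) wedges_subset_set by blast
  have sw: "set w1 = insert b (set w)" unfolding w1_def pr by auto
  have cw: "card (set w1) = Suc (card (set w))" using sw ab(2) by simp
  have h1: "w1 \<noteq> []" unfolding w1_def by simp
  have h2: "set w1 \<subseteq> V" using sw bV Suc.prems(2) by simp
  have h3: "wedges w1 \<subseteq> E" using ew ab(3) Suc.prems(3) by simp
  have h4: "hd w1 = last w1" using Suc.prems(4) unfolding w1_def pr by (cases p) auto
  have h5: "card (set w1) \<le> n" using cw Suc.hyps(2) by linarith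
  have h0: "d = n - card (set w1)" using cw Suc.hyps(2) by linarith
  obtain w' where w': "w' \<noteq> [] \<and> set w1 \<subseteq> set w' \<and> set w' \<subseteq> V \<and> wedges w' \<subseteq> E
       \<and> hd w' = last w' \<and> card (set w') = n \<and> length w' = length w1 + 2 * (n - card (set w1))
       \<and> card (wedges w') = card (wedges w1) + (n - card (set w1))"
    using Suc.hyps(1)[OF h0 h1 h2 h3 h4 h5 Suc.prems(6)] by blast
  have lw1: "length w1 = length w + 2" unfolding w1_def pr by simp
  have cw1: "card (wedges w1) = Suc (card (wedges w))" using ew nab by (simp add: finite_wedges)
  have x1: "length w' = length w1 + 2 * (n - card (set w1))" using w' by blast
  have x2: "card (wedges w') = card (wedges w1) + (n - card (set w1))" using w' by blast
  have y1: "length w' = length w + 2 * (n - card (set w))" using x1 lw1 cw Suc.hyps(2) by linarith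
  have y2: "card (wedges w') = card (wedges w) + (n - card (set w))" using x2 cw1 cw Suc.hyps(2) by linarith
  have y3: "set w \<subseteq> set w'" using w' sw by blast
  show ?case using w' y1 y2 y3 by blast
qed

lemma cover_walk:
  assumes fin: "finite V" and con: "connected_graph V E"
  shows "\<exists>w. w \<noteq> [] \<and> set w = V \<and> wedges w \<subseteq> E \<and> hd w = last w
        \<and> length w - 1 = 2 * (card V - 1) \<and> card (wedges w) = card V - 1"
proof -
  obtain r where r: "r \<in> V" using con unfolding connected_graph_def by blast
  have "card V \<ge> 1" using r fin card_0_eq by fastforce
  then obtain w where w: "w \<noteq> [] \<and> set [r] \<subseteq> set w \<and> set w \<subseteq> V \<and> wedges w \<subseteq> E \<and> hd w = last w
       \<and> card (set w) = card V \<and> length w = length [r] + 2 * (card V - card (set [r]))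
       \<and> card (wedges w) = card (wedges [r]) + (card V - card (set [r]))"
    using grow[OF fin con, of "[r]" "card V"] r by auto
  have "set w = V" using w fin by (metis card_subset_eq)
  then show ?thesis using w by (intro exI[of _ w]) auto
qed

lemma conn_edges:
  assumes fin: "finite V" and con: "connected_graph V E" and fe: "finite E"
  shows "card V \<le> card E + 1"
proof -
  obtain w where w: "wedges w \<subseteq> E" "card (wedges w) = card V - 1"
    using cover_walk[OF fin con] by blast
  then have "card V - 1 \<le> card E" using fe card_mono by metis
  then show ?thesis by linarith
qed

lemma tsp_le:
  "walk V E w \<Longrightarrow> hd w = last w \<Longrightarrow> S \<subseteq> set w \<Longrightarrow> tsp V E S \<le> length w - 1"
  unfolding tsp_def by (rule Least_le) blast

lemma steiner_le:
  "V' \<subseteq> V \<Longrightarrow> E' \<subseteq> E \<Longrightarrow> graph V' E' \<Longrightarrow> connected_graph V' E' \<Longrightarrow> S \<subseteq> V'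
   \<Longrightarrow> steiner_dist V E S \<le> card E'"
  unfolding steiner_dist_def by (rule Least_le) blast

lemma steiner_opt:
  assumes "graph V E" "connected_graph V E" "S \<subseteq> V"
  shows "\<exists>V' E'. V' \<subseteq> V \<and> E' \<subseteq> E \<and> graph V' E' \<and> connected_graph V' E' \<and> S \<subseteq> V'
     \<and> card E' = steiner_dist V E S"
proof -
  have "\<exists>m V' E'. V' \<subseteq> V \<and> E' \<subseteq> E \<and> graph V' E' \<and> connected_graph V' E' \<and> S \<subseteq> V' \<and> card E' = m"
    using assms by blast
  then show ?thesis unfolding steiner_dist_def by (rule LeastI_ex)
qed

lemma tsp_opt:
  assumes "graph V E" "connected_graph V E" "S \<subseteq> V"
  shows "\<exists>w. walk V E w \<and> hd w = last w \<and> S \<subseteq> set w \<and> length w - 1 = tsp V E S"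
proof -
  have fin: "finite V" using assms(1) unfolding graph_def by blast
  obtain w where "w \<noteq> [] \<and> set w = V \<and> wedges w \<subseteq> E \<and> hd w = last w"
    using cover_walk[OF fin assms(2)] by blast
  then have "\<exists>m w. walk V E w \<and> hd w = last w \<and> S \<subseteq> set w \<and> length w - 1 = m"
    using assms(3) unfolding walk_iff by blast
  then show ?thesis unfolding tsp_def by (rule LeastI_ex)
qed

lemma tsp_le_steiner:
  assumes g: "graph V E" and c: "connected_graph V E" and S: "S \<subseteq> V"
  shows "tsp V E S \<le> 2 * steiner_dist V E S"
proof -
  obtain V' E' where H: "V' \<subseteq> V" "E' \<subseteq> E" "graph V' E'" "connected_graph V' E'" "S \<subseteq> V'"
     "card E' = steiner_dist V E S" using steiner_opt[OF g c S] by blast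
  have fin: "finite V'" using H(3) unfolding graph_def by blast
  obtain w where w: "w \<noteq> [] \<and> set w = V' \<and> wedges w \<subseteq> E' \<and> hd w = last w
        \<and> length w - 1 = 2 * (card V' - 1) \<and> card (wedges w) = card V' - 1"
    using cover_walk[OF fin H(4)] by blast
  have "card V' \<le> card E' + 1" using conn_edges[OF fin H(4) graph_finite_E[OF H(3)]] .
  moreover have "walk V E w" using w H(1,2) unfolding walk_iff by blast
  then have "tsp V E S \<le> length w - 1" using tsp_le w H(5) by blast
  ultimately show ?thesis using w H(6) by linarith
qed

lemma wedges_concat:
  assumes "xs \<noteq> []" "ys \<noteq> []" "last xs = hd ys"
  shows "wedges (xs @ tl ys) = wedges xs \<union> wedges ys"
    "hd (xs @ tl ys) = hd xs" "last (xs @ tl ys) = last ys" "set (xs @ tl ys) = set xs \<union> set ys"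
proof -
  obtain xs0 l where x: "xs = xs0 @ [l]" using assms(1) by (cases xs rule: rev_cases) auto
  obtain ys0 where y: "ys = l # ys0" using assms(2,3) x by (cases ys) auto
  show "wedges (xs @ tl ys) = wedges xs \<union> wedges ys"
    using wedges_append[of xs0 l ys0] x y by simp
  show "hd (xs @ tl ys) = hd xs" using assms(1) by simp
  show "last (xs @ tl ys) = last ys" using x y by (cases ys0) auto
  show "set (xs @ tl ys) = set xs \<union> set ys" using x y by auto
qed

lemma tree_steiner_le_tsp:
  assumes g: "graph V E" and t: "tree V E" and S: "S \<subseteq> V"
  shows "2 * steiner_dist V E S \<le> tsp V E S"
proof -
  have c: "connected_graph V E" using t unfolding tree_def by blast
  obtain w where w: "walk V E w" "hd w = last w" "S \<subseteq> set w" "length w - 1 = tsp V E S"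
    using tsp_opt[OF g c S] by blast
  have w2: "w \<noteq> []" "set w \<subseteq> V" "wedges w \<subseteq> E" using w(1) unfolding walk_iff by auto
  have gr: "graph (set w) (wedges w)"
    unfolding graph_def
  proof (intro conjI ballI)
    fix e assume e: "e \<in> wedges w"
    have eE: "e \<in> E" using e w2(3) by blast
    obtain u v where uv: "e = {u,v}" "u \<noteq> v" using g eE unfolding graph_def by blast
    have "u \<in> set w" "v \<in> set w" using wedges_subset_set[OF e] uv(1) by auto
    then show "\<exists>u v. e = {u, v} \<and> u \<noteq> v \<and> u \<in> set w \<and> v \<in> set w"
      using uv by blast
  qed simp
  have cg: "connected_graph (set w) (wedges w)"
    unfolding connected_graph_def
  proof (intro conjI ballI)
    show "set w \<noteq> {}" using w2 by simp
  next
    fix u v assume u: "u \<in> set w" and v: "v \<in> set w"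
    obtain a b where ab: "w = a @ u # b" using u split_list by metis
    obtain c d where cd: "w = c @ v # d" using v split_list by metis
    have "last (u # b) = last w" using ab by simp
    moreover have "hd (c @ [v]) = hd w" using cd by (cases c) auto
    ultimately have l1: "last (u # b) = hd (c @ [v])" using w(2) by simp
    note cc = wedges_concat[of "u # b" "c @ [v]", OF _ _ l1]
    have "wedges (u # b) \<subseteq> wedges w" using ab wedges_sub_right by metis
    moreover have "wedges (c @ [v]) \<subseteq> wedges w" using cd wedges_sub_left
      by (metis append.assoc append_Cons append_Nil)
    moreover have "set (u # b) \<subseteq> set w" using ab by auto
    moreover have "set (c @ [v]) \<subseteq> set w" using cd by auto
    ultimately have "walk (set w) (wedges w) ((u # b) @ tl (c @ [v]))"
      unfolding walk_iff using cc(1,4) by auto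
    then show "\<exists>xs. walk (set w) (wedges w) xs \<and> hd xs = u \<and> last xs = v"
      using cc by (intro exI[of _ "(u # b) @ tl (c @ [v])"]) auto
  qed
  have "steiner_dist V E S \<le> card (wedges w)"
    using steiner_le[OF w2(2) w2(3) gr cg w(3)] .
  moreover have "2 * card (wedges w) \<le> length w - 1"
    using cyclefree_walk[OF g w(1) w(2)] t unfolding tree_def by blast
  ultimately show ?thesis using w(4) by linarith
qed

lemma arc_in:
  assumes g: "graph V E" and girth: "\<forall>c. cycle V E c \<longrightarrow> gg + 1 \<le> length c"
    and H: "V' \<subseteq> V" "E' \<subseteq> E" "connected_graph V' E'" "finite E'" "2 * card E' \<le> gg"
    and arc: "arc \<noteq> []" "distinct arc" "set arc \<subseteq> V" "wedges arc \<subseteq> E" "hd arc \<in> V'"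
      "last arc \<in> V'" "2 * (length arc - 1) < gg"
  shows "wedges arc \<subseteq> E'"
proof -
  obtain P0 where P0: "walk V' E' P0" "hd P0 = last arc" "last P0 = hd arc"
    using H(3) arc(5,6) unfolding connected_graph_def by blast
  obtain P where P: "P \<noteq> []" "distinct P" "set P \<subseteq> set P0" "wedges P \<subseteq> wedges P0"
     "hd P = hd P0" "last P = last P0"
    using shortcut[of P0] P0(1) unfolding walk_iff by blast
  have PE: "wedges P \<subseteq> E'" "set P \<subseteq> V'" using P P0(1) unfolding walk_iff by blast+
  define p where "p = length P - 1"
  have cp: "card (wedges P) = p" unfolding p_def using card_wedges_distinct[OF P(2)] .
  have pm: "p \<le> card E'" using cp PE(1) H(4) card_mono by metis
  define a where "a = length arc - 1"
  have ca: "card (wedges arc) = a" unfolding a_def using card_wedges_distinct[OF arc(2)] .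
  have l1: "last arc = hd P" using P P0 by simp
  note cc = wedges_concat[OF arc(1) P(1) l1]
  define W where "W = arc @ tl P"
  have wW: "walk V E W" unfolding walk_iff W_def using cc arc PE H(1,2) by auto
  have cW: "hd W = last W" unfolding W_def using cc P P0 by simp
  have lW: "length W - 1 = a + p" unfolding W_def a_def p_def using arc(1) P(1)
    by (cases P; cases arc) auto
  have "\<forall>c. cycle V E c \<longrightarrow> length W < length c" using girth lW arc(7) H(5) pm
    unfolding a_def by fastforce
  then have "2 * card (wedges W) \<le> length W - 1" using cyclefree_walk[OF g wW cW] by blast
  then have ineq: "2 * card (wedges arc \<union> wedges P) \<le> a + p" using cc lW unfolding W_def by simp
  have "card (wedges arc \<union> wedges P) + card (wedges arc \<inter> wedges P) = a + p"
    using card_Un_Int[OF finite_wedges finite_wedges, of arc P] ca cp by simp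
  moreover have "card (wedges arc \<inter> wedges P) \<le> p"
    using cp card_mono[OF finite_wedges, of "wedges arc \<inter> wedges P" P] by auto
  ultimately have "a \<le> card (wedges arc \<inter> wedges P)" using ineq by linarith
  then have "wedges arc \<inter> wedges P = wedges arc"
    using ca card_subset_eq[OF finite_wedges, of "wedges arc \<inter> wedges P" arc]
      card_mono[OF finite_wedges, of "wedges arc \<inter> wedges P" arc] by auto
  then show ?thesis using PE(1) by blast
qed

lemma cycle_facts:
  assumes "cycle V E C"
  shows "card (set C) = length C - 1" "distinct (butlast C)" "length C \<ge> 4"
    "set C \<subseteq> V" "wedges C \<subseteq> E" "hd C = last C" "C \<noteq> []"
proof -
  have c: "walk V E C" "length C \<ge> 4" "hd C = last C" "distinct (tl C)"
    using assms unfolding cycle_def by auto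
  then show "length C \<ge> 4" "set C \<subseteq> V" "wedges C \<subseteq> E" "hd C = last C" "C \<noteq> []"
    unfolding walk_iff by auto
  obtain x t where xt: "C = x # t" using c(2) by (cases C) auto
  have tne: "t \<noteq> []" using c(2) xt by auto
  have lt: "last t = x" using c(3) xt tne by simp
  then have "x \<in> set t" using tne last_in_set by metis
  then have "set C = set t" using xt by auto
  then show "card (set C) = length C - 1" using c(4) xt distinct_card by fastforce
  obtain t0 where t0: "t = t0 @ [x]" using tne lt by (metis append_butlast_last_id)
  show "distinct (butlast C)" using c(4) xt t0 by simp
qed

lemma nontree_strict:
  assumes g: "graph V E" and c: "connected_graph V E" and nt: "\<not> tree V E"
    and k: "k \<ge> 4" and kV: "k \<le> card V"
  shows "\<exists>S. S \<subseteq> V \<and> card S = k \<and> tsp V E S < 2 * steiner_dist V E S"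
proof -
  have fin: "finite V" using g unfolding graph_def by blast
  have "\<exists>C. cycle V E C" using nt c unfolding tree_def by blast
  then obtain C where C: "cycle V E C" and Cmin: "\<forall>c. cycle V E c \<longrightarrow> length C \<le> length c"
    using ex_has_least_nat[of "cycle V E" _ length] by blast
  note cf = cycle_facts[OF C]
  define gg where "gg = length C - 1"
  have girth: "\<forall>c. cycle V E c \<longrightarrow> gg + 1 \<le> length c" using Cmin cf(3) unfolding gg_def by fastforce
  have gg3: "gg \<ge> 3" using cf(3) unfolding gg_def by linarith
  show ?thesis
  proof (cases "gg \<le> 2 * k - 3")
    case True
    define n where "n = max gg k"
    have "gg \<le> card V" using cf(1,4) fin card_mono unfolding gg_def by metis
    then have nV: "n \<le> card V" using kV unfolding n_def by simp
    obtain w where w: "w \<noteq> [] \<and> set C \<subseteq> set w \<and> set w \<subseteq> V \<and> wedges w \<subseteq> E \<and> hd w = last w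
       \<and> card (set w) = n \<and> length w = length C + 2 * (n - card (set C))
       \<and> card (wedges w) = card (wedges C) + (n - card (set C))"
      using grow[OF fin c, of C n] cf nV unfolding n_def gg_def by auto
    obtain S where S: "S \<subseteq> set w" "card S = k" using obtain_subset_with_card_n[of k "set w"] w
      unfolding n_def by auto
    have "tsp V E S \<le> length w - 1" using tsp_le[of V E w S] w S unfolding walk_iff by blast
    also have "\<dots> \<le> 2 * k - 3" using w True gg3 cf(1) unfolding n_def gg_def by auto
    finally have t1: "tsp V E S \<le> 2 * k - 3" .
    obtain V' E' where H: "V' \<subseteq> V" "E' \<subseteq> E" "graph V' E'" "connected_graph V' E'" "S \<subseteq> V'"
      "card E' = steiner_dist V E S" using steiner_opt[OF g c] S w by (meson order_trans)
    have fin': "finite V'" using H(3) unfolding graph_def by blast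
    have "card V' \<le> card E' + 1" using conn_edges[OF fin' H(4) graph_finite_E[OF H(3)]] .
    moreover have "k \<le> card V'" using S(2) H(5) fin' card_mono by metis
    ultimately have "k - 1 \<le> steiner_dist V E S" using H(6) by linarith
    then have "tsp V E S < 2 * steiner_dist V E S" using t1 k by linarith
    then show ?thesis using S w by blast
  next
    case False
    then have gk: "gg \<ge> 2 * k - 2" by linarith
    define q where "q = gg div 2 + 1"
    define L where "L = take (q + 1) C"
    have lenC: "length C = gg + 1" unfolding gg_def using cf(3) by simp
    have qg: "q + 1 < length C" unfolding q_def lenC using gk k by linarith
    have "L = take (q+1) (butlast C)" unfolding L_def using qg by (simp add: take_butlast)
    then have dL: "distinct L" using cf(2) by simp
    have lenL: "length L = q + 1" unfolding L_def using qg by simp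
    have sLC: "set L \<subseteq> set C" unfolding L_def by (rule set_take_subset)
    have wLC: "wedges L \<subseteq> wedges C" unfolding L_def using wedges_sub_left
      by (metis append_take_drop_id)
    define T where "T = take (k - 1) L"
    define D where "D = drop (k - 2) L"
    define S where "S = set T \<union> {last L}"
    have kq: "k - 1 < q + 1" unfolding q_def using gk k by linarith
    have lenT: "length T = k - 1" unfolding T_def using lenL kq by simp
    have dT: "distinct T" unfolding T_def using dL by simp
    have LTD: "L = T @ drop (k - 1) L" unfolding T_def by simp
    have dne: "drop (k - 1) L \<noteq> []" using lenL kq by simp
    have lastL: "last L \<in> set (drop (k - 1) L)" using LTD dne by (metis last_appendR last_in_set)
    have "last L \<notin> set T" using dL LTD lastL by (metis disjoint_iff distinct_append)
    then have cardS: "card S = k" unfolding S_def using dT lenT distinct_card k by fastforce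
    have Lne: "L \<noteq> []" using lenL by auto
    have SV: "S \<subseteq> V" unfolding S_def T_def using sLC cf(4) Lne set_take_subset last_in_set by fastforce
    have SC: "S \<subseteq> set C" unfolding S_def T_def using sLC Lne set_take_subset last_in_set by fastforce
    have t1: "tsp V E S \<le> gg" using tsp_le[of V E C S] C SC cf unfolding cycle_def gg_def by blast
    obtain V' E' where H: "V' \<subseteq> V" "E' \<subseteq> E" "graph V' E'" "connected_graph V' E'" "S \<subseteq> V'"
      "card E' = steiner_dist V E S" using steiner_opt[OF g c SV] by blast
    have fE': "finite E'" using graph_finite_E[OF H(3)] .
    have "gg < 2 * card E'"
    proof (rule ccontr)
      assume "\<not> gg < 2 * card E'"
      then have m: "2 * card E' \<le> gg" by simp
      have wL: "wedges L \<subseteq> E" "set L \<subseteq> V" using wLC sLC cf by blast+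
      have wT: "wedges T \<subseteq> E'"
      proof
        fix e assume "e \<in> wedges T"
        then obtain j where j: "e = {T ! j, T ! Suc j}" "j < length T - 1" unfolding wedges_nth by blast
        have arc1: "[T ! j, T ! Suc j] \<noteq> []" by simp
        have "T ! j \<noteq> T ! Suc j" using dT j(2) nth_eq_iff_index_eq by fastforce
        then have arc2: "distinct [T ! j, T ! Suc j]" by simp
        have inT: "T ! j \<in> set T" "T ! Suc j \<in> set T" using j(2) by auto
        have sTL: "set T \<subseteq> set L" unfolding T_def by (rule set_take_subset)
        have "wedges T \<subseteq> wedges L" using LTD wedges_sub_left by metis
        then have "e \<in> E" using \<open>e \<in> wedges T\<close> wL by blast
        then have "wedges [T ! j, T ! Suc j] \<subseteq> E" using j by simp
        moreover have "set [T ! j, T ! Suc j] \<subseteq> V" using inT sTL wL by auto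
        moreover have "hd [T ! j, T ! Suc j] \<in> V'" "last [T ! j, T ! Suc j] \<in> V'"
          using inT H(5) unfolding S_def by auto
        ultimately have "wedges [T ! j, T ! Suc j] \<subseteq> E'"
          using arc_in[OF g girth H(1,2,4) fE' m arc1 arc2] gg3 by simp
        then show "e \<in> E'" using j by simp
      qed
      have km: "k - 2 < length L" using lenL kq by simp
      have sk: "Suc (k - 2) = k - 1" using k by linarith
      have Dhd: "D = L ! (k - 2) # drop (k - 1) L" unfolding D_def
        using Cons_nth_drop_Suc[OF km, symmetric] sk by simp
      have Ttk: "T = take (k - 2) L @ [L ! (k - 2)]" unfolding T_def
        using take_Suc_conv_app_nth[OF km] sk by simp
      have LTD2: "L = take (k - 2) L @ L ! (k - 2) # drop (k - 1) L"
        using Ttk LTD by simp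
      have wLs: "wedges L = wedges T \<union> wedges D"
        using wedges_append[of "take (k - 2) L" "L ! (k - 2)" "drop (k - 1) L"] LTD2 Ttk Dhd by metis
      have wD: "wedges D \<subseteq> E'"
      proof (rule arc_in[OF g girth H(1,2,4) fE' m])
        show "D \<noteq> []" using Dhd by simp
        show "distinct D" unfolding D_def using dL by simp
        show "set D \<subseteq> V" unfolding D_def using wL set_drop_subset by fastforce
        show "wedges D \<subseteq> E" using wLs wL by blast
        show "hd D \<in> V'" using Dhd Ttk H(5) unfolding S_def by auto
        show "last D \<in> V'" using H(5) km unfolding S_def D_def by auto
        show "2 * (length D - 1) < gg" unfolding D_def using lenL q_def k gk by simp
      qed
      have "card (wedges L) = q" using card_wedges_distinct[OF dL] lenL by simp
      moreover have "card (wedges L) \<le> card E'" using wLs wT wD fE' card_mono by (metis Un_subset_iff)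
      ultimately show False using m unfolding q_def by linarith
    qed
    then have "tsp V E S < 2 * steiner_dist V E S" using t1 H(6) by linarith
    then show ?thesis using SV cardS by blast
  qed
qed

theorem proposition2:
  fixes k :: nat
  assumes "k \<ge> 4"
  shows "(\<forall>(V :: 'a set) E. graph V E \<and> tree V E \<and> card V \<ge> k
            \<longrightarrow> W_tsp V E k = 2 * W_steiner V E k)
       \<and> (\<forall>(V :: 'a set) E. graph V E \<and> connected_graph V E \<and> \<not> tree V E \<and> card V \<ge> k
            \<longrightarrow> W_tsp V E k < 2 * W_steiner V E k)"
proof (intro conjI allI impI)
  fix V :: "'a set" and E
  assume h: "graph V E \<and> tree V E \<and> card V \<ge> k"
  have g: "graph V E" and t: "tree V E" using h by auto
  have c: "connected_graph V E" using t unfolding tree_def by blast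
  have eq: "\<And>S. S \<in> {S. S \<subseteq> V \<and> card S = k} \<Longrightarrow> tsp V E S = 2 * steiner_dist V E S"
  proof -
    fix S assume "S \<in> {S. S \<subseteq> V \<and> card S = k}"
    then have S: "S \<subseteq> V" by simp
    show "tsp V E S = 2 * steiner_dist V E S"
      using tsp_le_steiner[OF g c S] tree_steiner_le_tsp[OF g t S] by linarith
  qed
  show "W_tsp V E k = 2 * W_steiner V E k"
    unfolding W_tsp_def W_steiner_def sum_distrib_left using eq by (rule sum.cong[OF refl])
next
  fix V :: "'a set" and E
  assume h: "graph V E \<and> connected_graph V E \<and> \<not> tree V E \<and> card V \<ge> k"
  have g: "graph V E" and c: "connected_graph V E" and nt: "\<not> tree V E" and kV: "k \<le> card V"
    using h by auto
  have fin: "finite V" using g unfolding graph_def by blast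
  have fF: "finite {S. S \<subseteq> V \<and> card S = k}" using fin by simp
  have le: "\<forall>S\<in>{S. S \<subseteq> V \<and> card S = k}. tsp V E S \<le> 2 * steiner_dist V E S"
    using tsp_le_steiner[OF g c] by blast
  obtain S0 where S0: "S0 \<subseteq> V" "card S0 = k" "tsp V E S0 < 2 * steiner_dist V E S0"
    using nontree_strict[OF g c nt assms kV] by blast
  have "(\<Sum>S\<in>{S. S \<subseteq> V \<and> card S = k}. tsp V E S) < (\<Sum>S\<in>{S. S \<subseteq> V \<and> card S = k}. 2 * steiner_dist V E S)"
    using sum_strict_mono_ex1[OF fF le] S0 by blast
  then show "W_tsp V E k < 2 * W_steiner V E k"
    unfolding W_tsp_def W_steiner_def sum_distrib_left .
qed

end
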